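(* Let $\alpha,\alpha'\in(0,1)$ with $\alpha>\alpha'$, and let $\mathcal M_\alpha$ and $\mathcal M_{\alpha'}$ denote the sets of mechanisms that are undominated with respect to $\mathrm{RS}_\alpha$ and $\mathrm{RS}_{\alpha'}$ respectively. Then $\mathcal M_{\alpha'}\subseteq\mathcal M_\alpha$.
   Context: Setting. Let $\Theta=[\underline\theta,\overline\theta]$ with $0<\underline\theta<\overline\theta$. Let $c>0$ and let $P:\mathbb R_+\to\mathbb R_+$ be continuous and strictly decreasing with $P(\overline q)=0$ for some $\overline q>0$. Put $V(q)=\int_0^q P(z)\,dz$ and $\mathrm{TS}(\theta,q)=V(q)-c-\theta q$ for $q>0$, $\mathrm{TS}(\theta,0)=0$. Assume (A2): $\mathrm{TS}(\overline\theta,P^{-1}(\overline\theta))>0$. A mechanism is a triple $M=(r,q,u)$ of functions $r:\Theta\to[0,1]$, $q:\Theta\to[0,\overline q]$, $u:\Theta\to\mathbb R$ with $q(\theta)=0$ if and only if $r(\theta)=0$. It is IC if $u(\theta)\ge u(\theta')+(\theta'-\theta)q(\theta')r(\theta')$ for all $\theta,\theta'\in\Theta$, and IR if $u(\theta)\ge 0$ for all $\theta$. (Known fact: $M$ is IC iff $\theta\mapsto q(\theta)r(\theta)$ is nonincreasing and $u(\theta)=u(\overline\theta)+\int_\theta^{\overline\theta}q(z)r(z)\,dz$ for all $\theta$; an IC mechanism is IR iff $u(\overline\theta)\ge0$.) For a weight $\beta\in[0,1)$, the regulator's surplus at $\theta$ is $\mathrm{RS}_\beta(\theta,M)=r(\theta)\,\mathrm{TS}(\theta,q(\theta))-(1-\beta)u(\theta)$.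 An IC and IR mechanism $\tilde M$ dominates an IC and IR mechanism $M$ with respect to $\mathrm{RS}_\beta$ if $\mathrm{RS}_\beta(\theta,\tilde M)\ge \mathrm{RS}_\beta(\theta,M)$ for all $\theta\in\Theta$ with strict inequality for some $\theta$; $M$ is undominated (w.r.t. $\mathrm{RS}_\beta$) if it is IC, IR and not dominated in this sense by any IC and IR mechanism. *)

theory Defs
  imports "HOL-Analysis.Analysis"
begin

text \<open>Type parameter space Theta = {lo..hi}. A mechanism is a triple (r, q, u) of
  real functions; only their values on Theta matter.\<close>

type_synonym mech = "(real \<Rightarrow> real) \<times> (real \<Rightarrow> real) \<times> (real \<Rightarrow> real)"

definition V :: "(real \<Rightarrow> real) \<Rightarrow> real \<Rightarrow> real" where
  "V P q = integral {0..q} P"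

definition TS :: "(real \<Rightarrow> real) \<Rightarrow> real \<Rightarrow> real \<Rightarrow> real \<Rightarrow> real" where
  "TS P c \<theta> q = (if q = 0 then 0 else V P q - c - \<theta> * q)"

definition is_mechanism :: "real \<Rightarrow> real \<Rightarrow> real \<Rightarrow> mech \<Rightarrow> bool" where
  "is_mechanism lo hi qbar M = (case M of (r, q, u) \<Rightarrow>
     (\<forall>\<theta>\<in>{lo..hi}. r \<theta> \<in> {0..1} \<and> q \<theta> \<in> {0..qbar} \<and> (q \<theta> = 0 \<longleftrightarrow> r \<theta> = 0)))"

definition IC :: "real \<Rightarrow> real \<Rightarrow> mech \<Rightarrow> bool" where
  "IC lo hi M = (case M of (r, q, u) \<Rightarrow>
     (\<forall>\<theta>\<in>{lo..hi}. \<forall>\<theta>'\<in>{lo..hi}. u \<theta> \<ge> u \<theta>' + (\<theta>' - \<theta>) * q \<theta>' * r \<theta>'))"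

definition IR :: "real \<Rightarrow> real \<Rightarrow> mech \<Rightarrow> bool" where
  "IR lo hi M = (case M of (r, q, u) \<Rightarrow> (\<forall>\<theta>\<in>{lo..hi}. u \<theta> \<ge> 0))"

definition admissible :: "real \<Rightarrow> real \<Rightarrow> real \<Rightarrow> mech \<Rightarrow> bool" where
  "admissible lo hi qbar M = (is_mechanism lo hi qbar M \<and> IC lo hi M \<and> IR lo hi M)"

definition RS :: "(real \<Rightarrow> real) \<Rightarrow> real \<Rightarrow> real \<Rightarrow> real \<Rightarrow> mech \<Rightarrow> real" where
  "RS P c \<beta> \<theta> M = (case M of (r, q, u) \<Rightarrow> r \<theta> * TS P c \<theta> (q \<theta>) - (1 - \<beta>) * u \<theta>)"

definition dominates ::
  "(real \<Rightarrow> real) \<Rightarrow> real \<Rightarrow> real \<Rightarrow> real \<Rightarrow> real \<Rightarrow> real \<Rightarrow> mech \<Rightarrow> mech \<Rightarrow> bool" where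
  "dominates P c lo hi qbar \<beta> M' M =
     (admissible lo hi qbar M' \<and> admissible lo hi qbar M \<and>
      (\<forall>\<theta>\<in>{lo..hi}. RS P c \<beta> \<theta> M' \<ge> RS P c \<beta> \<theta> M) \<and>
      (\<exists>\<theta>\<in>{lo..hi}. RS P c \<beta> \<theta> M' > RS P c \<beta> \<theta> M))"

definition undominated ::
  "(real \<Rightarrow> real) \<Rightarrow> real \<Rightarrow> real \<Rightarrow> real \<Rightarrow> real \<Rightarrow> real \<Rightarrow> mech \<Rightarrow> bool" where
  "undominated P c lo hi qbar \<beta> M =
     (admissible lo hi qbar M \<and> \<not> (\<exists>M'. dominates P c lo hi qbar \<beta> M' M))"

end

theory Submission
  imports Defs
begin

lemma V_concave:
  fixes P :: "real \<Rightarrow> real"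
  assumes cont: "continuous_on {0..} P"
    and dec: "\<And>x y. 0 \<le> x \<Longrightarrow> x < y \<Longrightarrow> P y < P x"
    and x: "x > 0" and y: "y > 0" and t: "0 \<le> t" "t \<le> 1"
  shows "(1 - t) * V P x + t * V P y \<le> V P ((1 - t) * x + t * y)"
proof -
  have der: "((\<lambda>z. - V P z) has_real_derivative - P z) (at z)" if "z \<in> {0<..}" for z
  proof -
    have c: "continuous_on {0..z+1} P" using cont by (rule continuous_on_subset) auto
    have "((\<lambda>x. integral {0..x} P) has_real_derivative P z) (at z within {0..z+1})"
      using integral_has_real_derivative[OF c, of z] that by auto
    then have "((\<lambda>x. integral {0..x} P) has_real_derivative P z) (at z)"
      using that by (simp add: at_within_Icc_at)
    then show ?thesis unfolding V_def by (intro derivative_intros)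
  qed
  have "convex_on {0<..} (\<lambda>z. - V P z)"
    apply (rule convex_on_realI[where f'="\<lambda>z. - P z"])
      apply simp
     apply (rule der, assumption)
    using dec by (smt (verit, best) greaterThan_iff)
  from convex_onD[OF this, of t x y] x y t show ?thesis by simp
qed

lemma hull_V:
  fixes P :: "real \<Rightarrow> real"
  assumes cont: "continuous_on {0..} P"
    and dec: "\<And>x y. 0 \<le> x \<Longrightarrow> x < y \<Longrightarrow> P y < P x"
    and ab: "a \<ge> 0" "b \<ge> 0" "a + b > 0"
    and q1: "a > 0 \<Longrightarrow> q1 > 0" and q2: "b > 0 \<Longrightarrow> q2 > 0"
  shows "a * V P q1 + b * V P q2 \<le> (a + b) * V P ((a * q1 + b * q2) / (a + b))"
proof (cases "a = 0")
  case True then show ?thesis using ab by simp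
next
  case a0: False
  show ?thesis
  proof (cases "b = 0")
    case True then show ?thesis using ab by simp
  next
    case False
    define t where "t = b / (a + b)"
    have t: "0 \<le> t" "t \<le> 1" using ab unfolding t_def by auto
    have omt: "1 - t = a / (a + b)" using ab unfolding t_def by (simp add: field_simps)
    have e: "(a * q1 + b * q2) / (a + b) = (1 - t) * q1 + t * q2"
      unfolding omt using ab unfolding t_def by (simp add: add_divide_distrib)
    have "(1 - t) * V P q1 + t * V P q2 \<le> V P ((1 - t) * q1 + t * q2)"
      using V_concave[OF cont dec, of q1 q2 t] q1 q2 ab a0 False t by auto
    then have "(a+b) * ((1 - t) * V P q1 + t * V P q2) \<le> (a+b) * V P ((1 - t) * q1 + t * q2)"
      using ab by (intro mult_left_mono) auto
    moreover have "(a+b) * ((1 - t) * V P q1 + t * V P q2) = a * V P q1 + b * V P q2"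
    proof -
      have "(a+b) * (1 - t) = a" "(a+b) * t = b" using ab unfolding t_def by (auto simp: right_diff_distrib)
      then show ?thesis by (metis (no_types, lifting) distrib_left mult.assoc)
    qed
    ultimately show ?thesis using e by simp
  qed
qed

lemma pow_tangent:
  fixes a b :: real and n :: nat
  assumes "a > 0" "b \<ge> 0"
  shows "a ^ n + real n * a ^ (n - 1) * (b - a) \<le> b ^ n"
proof -
  have "1 + real n * (b / a - 1) \<le> (1 + (b / a - 1)) ^ n"
    using assms by (intro Bernoulli_inequality) simp
  then have "a ^ n * (1 + real n * (b / a - 1)) \<le> a ^ n * (b / a) ^ n"
    using assms by (intro mult_left_mono) auto
  moreover have "a ^ n * (b / a) ^ n = b ^ n" using assms by (simp add: power_divide)
  moreover have "a ^ n * (1 + real n * (b / a - 1)) = a ^ n + real n * a ^ (n - 1) * (b - a)"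
  proof (cases n)
    case 0 then show ?thesis by simp
  next
    case (Suc m)
    then show ?thesis using assms by (simp add: field_simps)
  qed
  ultimately show ?thesis by simp
qed

lemma h_tangent:
  fixes x y :: real and n :: nat
  assumes "n \<ge> 2"
  shows "real n * (max x 0) ^ (n - 1) * (y - x) \<le> (max y 0) ^ n - (max x 0) ^ n"
proof (cases "x \<le> 0")
  case True
  then show ?thesis using assms by (cases "n - 1") auto
next
  case False
  have "x ^ n + real n * x ^ (n - 1) * (max y 0 - x) \<le> (max y 0) ^ n"
    using pow_tangent[of x "max y 0" n] False by auto
  moreover have "real n * x ^ (n - 1) * (y - x) \<le> real n * x ^ (n - 1) * (max y 0 - x)"
    using False by (intro mult_left_mono) auto
  ultimately show ?thesis using False by auto
qed

lemma ic_comb: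
  fixes u u' ut ut' E Et hD hD' l :: real
  assumes "u \<ge> u' + E" "ut \<ge> ut' + Et" "hD - hD' \<ge> l * ((ut - u) - (ut' - u'))" "0 \<le> l" "l \<le> 1"
  shows "u + hD \<ge> u' + hD' + ((1 - l) * E + l * Et)"
proof -
  have "(1 - l) * (u - u' - E) \<ge> 0" using assms by simp
  moreover have "l * (ut - ut' - Et) \<ge> 0" using assms by simp
  ultimately show ?thesis using assms(3) by (simp add: algebra_simps)
qed

lemma key_pos:
  fixes d c0 \<alpha> \<alpha>' :: real and n :: nat
  assumes "d > 0" "c0 > 0" "n \<ge> 2" "real n * (1 - \<alpha>) > 1 - \<alpha>'"
  shows "(c0 * real n * d ^ (n - 1)) * ((1 - \<alpha>) * d) - (1 - \<alpha>') * (c0 * d ^ n) > 0"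
proof -
  have dn: "d ^ (n - 1) * d = d ^ n" using assms(3)
    by (metis One_nat_def Suc_pred less_le_trans not_less_eq_eq numeral_2_eq_2 power_Suc2 zero_less_Suc)
  have "(c0 * real n * d ^ (n - 1)) * ((1 - \<alpha>) * d) - (1 - \<alpha>') * (c0 * d ^ n)
      = c0 * d ^ n * (real n * (1 - \<alpha>) - (1 - \<alpha>'))"
    using dn by (simp add: algebra_simps)
  also have "\<dots> > 0" using assms by simp
  finally show ?thesis .
qed

lemma rs_shift:
  fixes S S' x x' \<alpha> \<alpha>' :: real
  assumes "x' - x \<le> 0" "\<alpha>' < \<alpha>"
  shows "(S' - (1 - \<alpha>') * x') - (S - (1 - \<alpha>') * x) \<ge> (S' - (1 - \<alpha>) * x') - (S - (1 - \<alpha>) * x)"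
proof -
  have "(\<alpha> - \<alpha>') * (x' - x) \<le> 0" using assms by (simp add: mult_nonneg_nonpos)
  then show ?thesis by (simp add: algebra_simps)
qed

lemma rTS: "(x = 0 \<longleftrightarrow> y = 0) \<Longrightarrow> y * TS P c \<theta> x = y * (V P x - c - \<theta> * x)"
  by (simp add: TS_def)

theorem proposition1:
  fixes P :: "real \<Rightarrow> real" and c lo hi qbar \<alpha> \<alpha>' :: real
  assumes "0 < lo" "lo < hi" "c > 0" "qbar > 0"
    and "continuous_on {0..} P"
    and "\<And>x y. 0 \<le> x \<Longrightarrow> x < y \<Longrightarrow> P y < P x"
    and "P qbar = 0"
    and A2: "\<exists>qh. 0 \<le> qh \<and> P qh = hi \<and> TS P c hi qh > 0"
    and "\<alpha> \<in> {0<..<1}" "\<alpha>' \<in> {0<..<1}" "\<alpha> > \<alpha>'"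
  shows "{M. undominated P c lo hi qbar \<alpha>' M} \<subseteq> {M. undominated P c lo hi qbar \<alpha> M}"
proof
  note cont = assms(5) and dec = assms(6)
  have al: "0 < \<alpha>" "\<alpha> < 1" "0 < \<alpha>'" "\<alpha>' < 1" "\<alpha>' < \<alpha>" using assms(9-11) by auto
  fix M assume "M \<in> {M. undominated P c lo hi qbar \<alpha>' M}"
  then have und: "undominated P c lo hi qbar \<alpha>' M" by simp
  obtain r q u where Mdef: "M = (r, q, u)" by (cases M) auto
  have admM: "admissible lo hi qbar M" using und unfolding undominated_def by simp
  have nd: "\<not> dominates P c lo hi qbar \<alpha>' M' M" for M' using und unfolding undominated_def by blast
  have mechM: "\<And>\<theta>. \<theta> \<in> {lo..hi} \<Longrightarrow> r \<theta> \<in> {0..1} \<and> q \<theta> \<in> {0..qbar} \<and> (q \<theta> = 0 \<longleftrightarrow> r \<theta> = 0)"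
    and ICM: "\<And>\<theta> \<theta>'. \<theta> \<in> {lo..hi} \<Longrightarrow> \<theta>' \<in> {lo..hi} \<Longrightarrow> u \<theta> \<ge> u \<theta>' + (\<theta>' - \<theta>) * q \<theta>' * r \<theta>'"
    and IRM: "\<And>\<theta>. \<theta> \<in> {lo..hi} \<Longrightarrow> u \<theta> \<ge> 0"
    using admM unfolding Mdef admissible_def is_mechanism_def IC_def IR_def by auto
  show "M \<in> {M. undominated P c lo hi qbar \<alpha> M}"
  proof (simp add: undominated_def admM, intro allI notI)
    fix M' assume dom: "dominates P c lo hi qbar \<alpha> M' M"
    obtain rt qt ut where M'def: "M' = (rt, qt, ut)" by (cases M') auto
    have admM': "admissible lo hi qbar M'" using dom unfolding dominates_def by simp
    have mechM': "\<And>\<theta>. \<theta> \<in> {lo..hi} \<Longrightarrow> rt \<theta> \<in> {0..1} \<and> qt \<theta> \<in> {0..qbar} \<and> (qt \<theta> = 0 \<longleftrightarrow> rt \<theta> = 0)"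
      and ICM': "\<And>\<theta> \<theta>'. \<theta> \<in> {lo..hi} \<Longrightarrow> \<theta>' \<in> {lo..hi} \<Longrightarrow> ut \<theta> \<ge> ut \<theta>' + (\<theta>' - \<theta>) * qt \<theta>' * rt \<theta>'"
      and IRM': "\<And>\<theta>. \<theta> \<in> {lo..hi} \<Longrightarrow> ut \<theta> \<ge> 0"
      using admM' unfolding M'def admissible_def is_mechanism_def IC_def IR_def by auto
    define S where "S \<theta> = r \<theta> * TS P c \<theta> (q \<theta>)" for \<theta>
    define St where "St \<theta> = rt \<theta> * TS P c \<theta> (qt \<theta>)" for \<theta>
    define D where "D \<theta> = ut \<theta> - u \<theta>" for \<theta>
    have RSM: "RS P c \<beta> \<theta> M = S \<theta> - (1 - \<beta>) * u \<theta>" for \<beta> \<theta>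
      unfolding Mdef RS_def S_def by simp
    have RSM': "RS P c \<beta> \<theta> M' = St \<theta> - (1 - \<beta>) * ut \<theta>" for \<beta> \<theta>
      unfolding M'def RS_def St_def by simp
    have ge: "\<And>\<theta>. \<theta> \<in> {lo..hi} \<Longrightarrow> St \<theta> - (1 - \<alpha>) * ut \<theta> \<ge> S \<theta> - (1 - \<alpha>) * u \<theta>"
      using dom unfolding dominates_def RSM RSM' by auto
    obtain \<theta>0 where th0: "\<theta>0 \<in> {lo..hi}" "St \<theta>0 - (1 - \<alpha>) * ut \<theta>0 > S \<theta>0 - (1 - \<alpha>) * u \<theta>0"
      using dom unfolding dominates_def RSM RSM' by auto
    have ge': "St \<theta> - S \<theta> \<ge> (1 - \<alpha>) * D \<theta>" if "\<theta> \<in> {lo..hi}" for \<theta>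
      using ge[OF that] unfolding D_def by (simp add: algebra_simps)
    show False
    proof (cases "\<forall>\<theta>\<in>{lo..hi}. D \<theta> \<le> 0")
      case True
      have "dominates P c lo hi qbar \<alpha>' M' M"
        unfolding dominates_def
      proof (intro conjI admM admM' ballI)
        fix \<theta> assume th: "\<theta> \<in> {lo..hi}"
        have "(St \<theta> - (1 - \<alpha>') * ut \<theta>) - (S \<theta> - (1 - \<alpha>') * u \<theta>)
            \<ge> (St \<theta> - (1 - \<alpha>) * ut \<theta>) - (S \<theta> - (1 - \<alpha>) * u \<theta>)"
          using rs_shift[of "ut \<theta>" "u \<theta>" \<alpha>' \<alpha>] True th al unfolding D_def by auto
        then show "RS P c \<alpha>' \<theta> M \<le> RS P c \<alpha>' \<theta> M'" using ge[OF th] unfolding RSM RSM' by linarith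
      next
        have "(St \<theta>0 - (1 - \<alpha>') * ut \<theta>0) - (S \<theta>0 - (1 - \<alpha>') * u \<theta>0)
            \<ge> (St \<theta>0 - (1 - \<alpha>) * ut \<theta>0) - (S \<theta>0 - (1 - \<alpha>) * u \<theta>0)"
          using rs_shift[of "ut \<theta>0" "u \<theta>0" \<alpha>' \<alpha>] True th0 al unfolding D_def by auto
        then show "\<exists>\<theta>\<in>{lo..hi}. RS P c \<alpha>' \<theta> M' > RS P c \<alpha>' \<theta> M"
          using th0 unfolding RSM RSM' by (intro bexI[of _ \<theta>0]) auto
      qed
      then show False using nd by blast
    next
      case False
      then obtain \<theta>1 where th1: "\<theta>1 \<in> {lo..hi}" "D \<theta>1 > 0" by auto
      obtain n0 :: nat where n0: "(1 - \<alpha>') / (1 - \<alpha>) < real n0" using reals_Archimedean2 by blast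
      define n where "n = n0 + 2"
      have n2: "n \<ge> 2" unfolding n_def by simp
      have nal: "real n * (1 - \<alpha>) > 1 - \<alpha>'"
      proof -
        have "1 - \<alpha>' < real n0 * (1 - \<alpha>)" using n0 al by (simp add: divide_less_eq)
        also have "\<dots> \<le> real n * (1 - \<alpha>)" using al unfolding n_def by (intro mult_right_mono) auto
        finally show ?thesis .
      qed
      define B where "B = \<bar>ut hi\<bar> + (hi - lo) * qbar + 1"
      have Bpos: "B > 0" unfolding B_def using assms(2,4) by (simp add: add_nonneg_pos)
      have DB: "D \<theta> \<le> B" if th: "\<theta> \<in> {lo..hi}" for \<theta>
      proof -
        have hiin: "hi \<in> {lo..hi}" using assms(2) by auto
        have "ut hi \<ge> ut \<theta> + (\<theta> - hi) * qt \<theta> * rt \<theta>" using ICM'[OF hiin th] .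
        moreover have "qt \<theta> * rt \<theta> \<le> qbar"
          using mechM'[OF th] by (auto intro: mult_le_one mult_mono[of _ qbar _ 1, simplified])
        moreover have "qt \<theta> * rt \<theta> \<ge> 0" using mechM'[OF th] by auto
        ultimately have "ut \<theta> \<le> ut hi + (hi - \<theta>) * (qt \<theta> * rt \<theta>)" by (simp add: algebra_simps)
        also have "(hi - \<theta>) * (qt \<theta> * rt \<theta>) \<le> (hi - lo) * qbar"
          using th \<open>qt \<theta> * rt \<theta> \<le> qbar\<close> \<open>qt \<theta> * rt \<theta> \<ge> 0\<close> by (intro mult_mono) auto
        finally show ?thesis using IRM[OF th] unfolding D_def B_def by linarith
      qed
      define c0 where "c0 = 1 / (real n * B ^ (n - 1))"
      have c0pos: "c0 > 0" unfolding c0_def using Bpos n2 by simp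
      define h where "h x = c0 * (max x 0) ^ n" for x :: real
      define sl where "sl x = c0 * real n * (max x 0) ^ (n - 1)" for x :: real
      have h_tan: "h y - h x \<ge> sl x * (y - x)" for x y
      proof -
        have "c0 * (real n * (max x 0) ^ (n - 1) * (y - x)) \<le> c0 * ((max y 0) ^ n - (max x 0) ^ n)"
          using h_tangent[OF n2, of x y] c0pos by (intro mult_left_mono) auto
        then show ?thesis unfolding h_def sl_def by (simp add: algebra_simps)
      qed
      have sl0: "sl x \<ge> 0" for x unfolding sl_def using c0pos by simp
      have sl1: "sl x \<le> 1" if "x \<le> B" for x
      proof -
        have "(max x 0) ^ (n - 1) \<le> B ^ (n - 1)" using that Bpos by (intro power_mono) auto
        then have "c0 * real n * (max x 0) ^ (n - 1) \<le> c0 * real n * B ^ (n - 1)"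
          using c0pos by (intro mult_left_mono) auto
        also have "\<dots> = 1" unfolding c0_def using Bpos n2 by simp
        finally show ?thesis unfolding sl_def .
      qed
      have h0: "h x \<ge> 0" for x unfolding h_def using c0pos by simp
      have hneg: "x \<le> 0 \<Longrightarrow> h x = 0 \<and> sl x = 0" for x
        unfolding h_def sl_def using n2 by (cases "n - 1") auto
      define l where "l \<theta> = sl (D \<theta>)" for \<theta>
      define a where "a \<theta> = (1 - l \<theta>) * r \<theta>" for \<theta>
      define b where "b \<theta> = l \<theta> * rt \<theta>" for \<theta>
      define r2 where "r2 \<theta> = a \<theta> + b \<theta>" for \<theta>
      define q2 where "q2 \<theta> = (if r2 \<theta> = 0 then 0 else (a \<theta> * q \<theta> + b \<theta> * qt \<theta>) / r2 \<theta>)" for \<theta>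
      define u2 where "u2 \<theta> = u \<theta> + h (D \<theta>)" for \<theta>
      define M2 where "M2 = (r2, q2, u2)"
      have lb: "0 \<le> l \<theta> \<and> l \<theta> \<le> 1" if "\<theta> \<in> {lo..hi}" for \<theta>
        unfolding l_def using sl0 sl1 DB[OF that] by auto
      have ab: "0 \<le> a \<theta> \<and> 0 \<le> b \<theta> \<and> a \<theta> + b \<theta> \<le> 1" if th: "\<theta> \<in> {lo..hi}" for \<theta>
      proof -
        have "a \<theta> \<le> (1 - l \<theta>)" "b \<theta> \<le> l \<theta>"
          using lb[OF th] mechM[OF th] mechM'[OF th] unfolding a_def b_def
          by (auto intro: mult_left_le)
        then show ?thesis using lb[OF th] mechM[OF th] mechM'[OF th] unfolding a_def b_def by auto
      qed
      have Q2: "q2 \<theta> * r2 \<theta> = a \<theta> * q \<theta> + b \<theta> * qt \<theta>" if th: "\<theta> \<in> {lo..hi}" for \<theta>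
      proof (cases "r2 \<theta> = 0")
        case True
        then have "a \<theta> = 0" "b \<theta> = 0" using ab[OF th] unfolding r2_def by auto
        then show ?thesis using True unfolding q2_def by simp
      next
        case False then show ?thesis unfolding q2_def by simp
      qed
      have mech2: "r2 \<theta> \<in> {0..1} \<and> q2 \<theta> \<in> {0..qbar} \<and> (q2 \<theta> = 0 \<longleftrightarrow> r2 \<theta> = 0)"
        if th: "\<theta> \<in> {lo..hi}" for \<theta>
      proof (cases "r2 \<theta> = 0")
        case True then show ?thesis unfolding q2_def using assms(4) by simp
      next
        case False
        have R: "r2 \<theta> > 0" using False ab[OF th] unfolding r2_def by auto
        have num_le: "a \<theta> * q \<theta> + b \<theta> * qt \<theta> \<le> r2 \<theta> * qbar"
        proof -
          have "a \<theta> * q \<theta> \<le> a \<theta> * qbar" "b \<theta> * qt \<theta> \<le> b \<theta> * qbar"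
            using ab[OF th] mechM[OF th] mechM'[OF th] by (auto intro: mult_left_mono)
          then show ?thesis unfolding r2_def by (simp add: algebra_simps)
        qed
        have num_pos: "a \<theta> * q \<theta> + b \<theta> * qt \<theta> > 0"
        proof (cases "a \<theta> > 0")
          case True
          then have "r \<theta> \<noteq> 0" unfolding a_def by auto
          then have "q \<theta> > 0" using mechM[OF th] by auto
          then show ?thesis using True ab[OF th] mechM'[OF th] by (simp add: add_pos_nonneg)
        next
          case False
          then have "b \<theta> > 0" using R ab[OF th] unfolding r2_def by auto
          then have "rt \<theta> \<noteq> 0" unfolding b_def by auto
          then have "qt \<theta> > 0" using mechM'[OF th] by auto
          then show ?thesis using \<open>b \<theta> > 0\<close> ab[OF th] mechM[OF th] by (simp add: add_nonneg_pos)
        qed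
        show ?thesis using R num_le num_pos ab[OF th] unfolding q2_def r2_def
          by (auto simp: divide_le_eq mult.commute)
      qed
      have surplus: "r2 \<theta> * TS P c \<theta> (q2 \<theta>) \<ge> (1 - l \<theta>) * S \<theta> + l \<theta> * St \<theta>"
        if th: "\<theta> \<in> {lo..hi}" for \<theta>
      proof -
        have e1: "(1 - l \<theta>) * S \<theta> = a \<theta> * (V P (q \<theta>) - c - \<theta> * q \<theta>)"
          unfolding S_def a_def using rTS[of "q \<theta>" "r \<theta>" P c \<theta>] mechM[OF th] by simp
        have e2: "l \<theta> * St \<theta> = b \<theta> * (V P (qt \<theta>) - c - \<theta> * qt \<theta>)"
          unfolding St_def b_def using rTS[of "qt \<theta>" "rt \<theta>" P c \<theta>] mechM'[OF th] by simp
        have e3: "r2 \<theta> * TS P c \<theta> (q2 \<theta>) = r2 \<theta> * (V P (q2 \<theta>) - c - \<theta> * q2 \<theta>)"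
          using rTS[of "q2 \<theta>" "r2 \<theta>" P c \<theta>] mech2[OF th] by simp
        show ?thesis
        proof (cases "r2 \<theta> = 0")
          case True
          then have "a \<theta> = 0" "b \<theta> = 0" using ab[OF th] unfolding r2_def by auto
          then show ?thesis using e1 e2 e3 True by (simp only: mult_zero_left)
        next
          case False
          have R: "r2 \<theta> > 0" using False ab[OF th] unfolding r2_def by auto
          have hv: "a \<theta> * V P (q \<theta>) + b \<theta> * V P (qt \<theta>) \<le> r2 \<theta> * V P (q2 \<theta>)"
          proof -
            have qa: "a \<theta> > 0 \<Longrightarrow> q \<theta> > 0" using mechM[OF th] unfolding a_def by auto
            have qb: "b \<theta> > 0 \<Longrightarrow> qt \<theta> > 0" using mechM'[OF th] unfolding b_def by auto
            show ?thesis using hull_V[OF cont dec, of "a \<theta>" "b \<theta>" "q \<theta>" "qt \<theta>"] ab[OF th] R qa qb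
              unfolding q2_def r2_def by auto
          qed
          have "r2 \<theta> * q2 \<theta> = a \<theta> * q \<theta> + b \<theta> * qt \<theta>" using Q2[OF th] by (simp add: mult.commute)
          then have "r2 \<theta> * TS P c \<theta> (q2 \<theta>) = r2 \<theta> * V P (q2 \<theta>) - c * r2 \<theta> - \<theta> * (a \<theta> * q \<theta> + b \<theta> * qt \<theta>)"
            using e3 by (simp add: algebra_simps)
          moreover have "(1 - l \<theta>) * S \<theta> + l \<theta> * St \<theta> = (a \<theta> * V P (q \<theta>) + b \<theta> * V P (qt \<theta>)) - c * r2 \<theta> - \<theta> * (a \<theta> * q \<theta> + b \<theta> * qt \<theta>)"
            using e1 e2 unfolding r2_def by (simp add: algebra_simps)
          ultimately show ?thesis using hv by linarith
        qed
      qed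
      have adm2: "admissible lo hi qbar M2"
        unfolding admissible_def is_mechanism_def IC_def IR_def M2_def
      proof (simp, intro conjI ballI)
        fix \<theta> assume th: "\<theta> \<in> {lo..hi}"
        show "0 \<le> r2 \<theta>" "r2 \<theta> \<le> 1" "0 \<le> q2 \<theta>" "q2 \<theta> \<le> qbar" "(q2 \<theta> = 0) = (r2 \<theta> = 0)"
          using mech2[OF th] by auto
        show "0 \<le> u2 \<theta>" unfolding u2_def using IRM[OF th] h0 by (simp add: add_nonneg_nonneg)
      next
        fix \<theta> \<theta>' assume th: "\<theta> \<in> {lo..hi}" and th': "\<theta>' \<in> {lo..hi}"
        have hh: "h (D \<theta>) - h (D \<theta>') \<ge> l \<theta>' * ((ut \<theta> - u \<theta>) - (ut \<theta>' - u \<theta>'))"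
          using h_tan[of "D \<theta>'" "D \<theta>"] unfolding l_def D_def by (simp add: mult.commute)
        have "u \<theta> + h (D \<theta>) \<ge> u \<theta>' + h (D \<theta>') + ((1 - l \<theta>') * ((\<theta>' - \<theta>) * q \<theta>' * r \<theta>')
               + l \<theta>' * ((\<theta>' - \<theta>) * qt \<theta>' * rt \<theta>'))"
          using ic_comb[OF ICM[OF th th'] ICM'[OF th th'] hh] lb[OF th'] by auto
        moreover have "(\<theta>' - \<theta>) * q2 \<theta>' * r2 \<theta>' = (1 - l \<theta>') * ((\<theta>' - \<theta>) * q \<theta>' * r \<theta>')
               + l \<theta>' * ((\<theta>' - \<theta>) * qt \<theta>' * rt \<theta>')"
        proof -
          have "q2 \<theta>' * r2 \<theta>' = (1 - l \<theta>') * (q \<theta>' * r \<theta>') + l \<theta>' * (qt \<theta>' * rt \<theta>')"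
            using Q2[OF th'] unfolding a_def b_def by (simp add: algebra_simps)
          then have "(\<theta>' - \<theta>) * (q2 \<theta>' * r2 \<theta>') = (\<theta>' - \<theta>) * ((1 - l \<theta>') * (q \<theta>' * r \<theta>') + l \<theta>' * (qt \<theta>' * rt \<theta>'))"
            by simp
          then show ?thesis by (simp add: algebra_simps)
        qed
        ultimately show "u2 \<theta>' + (\<theta>' - \<theta>) * q2 \<theta>' * r2 \<theta>' \<le> u2 \<theta>" unfolding u2_def by linarith
      qed
      have RS2: "RS P c \<alpha>' \<theta> M2 - RS P c \<alpha>' \<theta> M \<ge> l \<theta> * ((1 - \<alpha>) * D \<theta>) - (1 - \<alpha>') * h (D \<theta>)"
        if th: "\<theta> \<in> {lo..hi}" for \<theta>
      proof -
        have "RS P c \<alpha>' \<theta> M2 = r2 \<theta> * TS P c \<theta> (q2 \<theta>) - (1 - \<alpha>') * u2 \<theta>"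
          unfolding M2_def RS_def by simp
        moreover have "l \<theta> * (St \<theta> - S \<theta>) \<ge> l \<theta> * ((1 - \<alpha>) * D \<theta>)"
          using ge'[OF th] lb[OF th] by (intro mult_left_mono) auto
        ultimately show ?thesis using surplus[OF th] unfolding RSM u2_def by (simp add: algebra_simps)
      qed
      have "dominates P c lo hi qbar \<alpha>' M2 M"
        unfolding dominates_def
      proof (intro conjI adm2 admM ballI)
        fix \<theta> assume th: "\<theta> \<in> {lo..hi}"
        have "l \<theta> * ((1 - \<alpha>) * D \<theta>) - (1 - \<alpha>') * h (D \<theta>) \<ge> 0"
        proof (cases "D \<theta> \<le> 0")
          case True then show ?thesis using hneg[OF True] unfolding l_def by simp
        next
          case False
          then show ?thesis using key_pos[OF _ c0pos n2 nal, of "D \<theta>"]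
            unfolding l_def sl_def h_def by simp
        qed
        then show "RS P c \<alpha>' \<theta> M \<le> RS P c \<alpha>' \<theta> M2" using RS2[OF th] by linarith
      next
        have "l \<theta>1 * ((1 - \<alpha>) * D \<theta>1) - (1 - \<alpha>') * h (D \<theta>1) > 0"
          using key_pos[OF _ c0pos n2 nal, of "D \<theta>1"] th1
          unfolding l_def sl_def h_def by simp
        then show "\<exists>\<theta>\<in>{lo..hi}. RS P c \<alpha>' \<theta> M < RS P c \<alpha>' \<theta> M2"
          using RS2[OF th1(1)] th1 by (intro bexI[of _ \<theta>1]) auto
      qed
      then show False using nd by blast
    qed
  qed
qed

end
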